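(* Let $k=k(n)$ be integers with $3\le k(n)\le n-3$ for all sufficiently large $n$, and suppose $\log k(n)/\log n\to 0$ as $n\to\infty$. Then for all sufficiently large $n$, \[ \mathsf{BO}(k(n),\mathbb{Z}/n\mathbb{Z})\ge n\exp\!\left(-5\sqrt{\log k(n)\,\log n}\right). \]
   Context: For a positive integer $k$, a set $\{g_1,\dots,g_k\}$ of $k$ distinct elements of a finite abelian group $G$ (written additively) is called $k$-barycentric if $\sum_{i=1}^k g_i = k\,g_j$ for some $1\le j\le k$. The $k$-th barycentric Olson constant $\mathsf{BO}(k,G)$ is the smallest integer $\ell$ such that every subset $A\subseteq G$ with $|A|\ge \ell$ contains a $k$-barycentric subset (so that always $\mathsf{BO}(k,G)\le |G|+1$). $\log$ denotes the natural logarithm. *)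

theory Defs
  imports Complex_Main
begin

text \<open>The cyclic group Z/nZ is modelled by the residues {0..<n} (as naturals) with
  addition modulo n. Group equalities are congruences mod n.\<close>

definition barycentric_mod :: "nat \<Rightarrow> nat \<Rightarrow> nat set \<Rightarrow> bool" where
  "barycentric_mod n k S \<longleftrightarrow> S \<subseteq> {0..<n} \<and> card S = k \<and>
     (\<exists>j\<in>S. (\<Sum>S) mod n = (k * j) mod n)"

definition BO_cyclic :: "nat \<Rightarrow> nat \<Rightarrow> nat" where
  "BO_cyclic k n = (LEAST l. \<forall>A. A \<subseteq> {0..<n} \<and> card A \<ge> l \<longrightarrow>
       (\<exists>S\<subseteq>A. barycentric_mod n k S))"

end

theory Submission
  imports Defs "HOL-Library.FuncSet"
begin
lemma digits_unique:
  fixes y z :: "nat \<Rightarrow> nat"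
  shows "(\<forall>t<D. y t < d) \<Longrightarrow> (\<forall>t<D. z t < d) \<Longrightarrow>
    (\<Sum>t<D. y t * d^t) = (\<Sum>t<D. z t * d^t) \<Longrightarrow> \<forall>t<D. y t = z t"
proof (induction D arbitrary: y z)
  case 0 then show ?case by simp
next
  case (Suc D)
  have ey: "(\<Sum>t<Suc D. y t * d^t) = y 0 + d * (\<Sum>t<D. y (Suc t) * d^t)" for y :: "nat \<Rightarrow> nat"
    unfolding sum.lessThan_Suc_shift by (simp add: sum_distrib_left mult.assoc mult.left_commute)
  have d0: "d > 0" using Suc.prems(1) by auto
  have y0: "y 0 < d" and z0: "z 0 < d" using Suc.prems by auto
  have eq: "y 0 + d * (\<Sum>t<D. y (Suc t) * d^t) = z 0 + d * (\<Sum>t<D. z (Suc t) * d^t)"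
    using Suc.prems(3) ey[of y] ey[of z] by simp
  have "(y 0 + d * (\<Sum>t<D. y (Suc t) * d^t)) mod d = y 0" using y0 by simp
  moreover have "(z 0 + d * (\<Sum>t<D. z (Suc t) * d^t)) mod d = z 0" using z0 by simp
  ultimately have h0: "y 0 = z 0" using eq by metis
  with eq d0 have "(\<Sum>t<D. y (Suc t) * d^t) = (\<Sum>t<D. z (Suc t) * d^t)" by simp
  moreover have "\<forall>t<D. y (Suc t) < d" "\<forall>t<D. z (Suc t) < d" using Suc.prems by auto
  ultimately have "\<forall>t<D. y (Suc t) = z (Suc t)" using Suc.IH[of "\<lambda>t. y (Suc t)" "\<lambda>t. z (Suc t)"] by blast
  then show ?case using h0 by (metis Suc_less_SucD not0_implies_Suc)
qed

lemma enc_less: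
  fixes x :: "nat \<Rightarrow> nat"
  shows "(\<forall>t<D. x t < d) \<Longrightarrow> (\<Sum>t<D. x t * d^t) < d^D"
proof (induction D)
  case 0 then show ?case by simp
next
  case (Suc D)
  have "(\<Sum>t<Suc D. x t * d^t) = (\<Sum>t<D. x t * d^t) + x D * d^D" by simp
  also have "\<dots> < d^D + x D * d^D" using Suc by simp
  also have "\<dots> = (x D + 1) * d^D" by simp
  also have "\<dots> \<le> d * d^D" using Suc.prems by (intro mult_right_mono) auto
  finally show ?case by simp
qed

lemma pigeon:
  assumes "finite X" "f ` X \<subseteq> {..R}"
  shows "\<exists>r\<le>R. card X \<le> Suc R * card {x\<in>X. f x = r}"
proof (rule ccontr)
  assume "\<not> ?thesis"
  hence lt: "\<forall>r\<in>{..R}. Suc R * card {x\<in>X. f x = r} < card X" by auto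
  have "card X = (\<Sum>r\<in>{..R}. card {x\<in>X. f x = r})"
    using sum.group[OF assms(1) finite_atMost assms(2), of "\<lambda>_. 1::nat"] by simp
  hence "Suc R * card X = (\<Sum>r\<in>{..R}. Suc R * card {x\<in>X. f x = r})"
    by (simp add: sum_distrib_left)
  also have "\<dots> < (\<Sum>r\<in>{..R}. card X)"
    using lt by (intro sum_strict_mono) auto
  also have "\<dots> = Suc R * card X" by simp
  finally show False by simp
qed

lemma sq_identity:
  fixes a :: "'x \<Rightarrow> nat \<Rightarrow> int" and b :: "nat \<Rightarrow> int"
  shows "(\<Sum>x\<in>W. \<Sum>t<D. (a x t - b t)^2) =
     (\<Sum>x\<in>W. \<Sum>t<D. (a x t)^2) - 2 * (\<Sum>t<D. b t * (\<Sum>x\<in>W. a x t)) + int (card W) * (\<Sum>t<D. (b t)^2)"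
proof -
  have "(\<Sum>x\<in>W. \<Sum>t<D. (a x t - b t)^2) =
     (\<Sum>x\<in>W. \<Sum>t<D. (a x t)^2) - (\<Sum>x\<in>W. \<Sum>t<D. 2 * b t * a x t) + (\<Sum>x\<in>W. \<Sum>t<D. (b t)^2)"
    by (simp add: power2_diff sum.distrib sum_subtractf algebra_simps)
  also have "(\<Sum>x\<in>W. \<Sum>t<D. 2 * b t * a x t) = 2 * (\<Sum>t<D. b t * (\<Sum>x\<in>W. a x t))"
    by (subst sum.swap) (simp add: sum_distrib_left mult.assoc)
  also have "(\<Sum>x\<in>W. \<Sum>t<D. (b t)^2) = int (card W) * (\<Sum>t<D. (b t)^2)" by simp
  finally show ?thesis .
qed

lemma BO_ge:
  assumes "A \<subseteq> {0..<n}" "\<not> (\<exists>S\<subseteq>A. barycentric_mod n k S)"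
  shows "card A < BO_cyclic k n"
proof -
  let ?P = "\<lambda>l. \<forall>A. A \<subseteq> {0..<n} \<and> card A \<ge> l \<longrightarrow> (\<exists>S\<subseteq>A. barycentric_mod n k S)"
  have "?P (Suc n)"
  proof (intro allI impI)
    fix B assume "B \<subseteq> {0..<n} \<and> Suc n \<le> card B"
    moreover hence "card B \<le> n" using card_mono[of "{0..<n}" B] by auto
    ultimately show "\<exists>S\<subseteq>B. barycentric_mod n k S" by simp
  qed
  hence "?P (BO_cyclic k n)" unfolding BO_cyclic_def by (rule LeastI)
  thus ?thesis using assms by (meson not_le)
qed

lemma construction:
  fixes K m D n :: nat
  assumes K2: "K \<ge> 2" and m1: "m \<ge> 1" and bd: "K * (K*m)^D \<le> n"
  shows "m^D \<le> Suc (D*(m-1)^2) * BO_cyclic K n"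
proof -
  define d where "d = K*m"
  define X where "X = PiE {..<D} (\<lambda>_. {..<m})"
  define sq where "sq x = (\<Sum>t<D. (x t)^2)" for x :: "nat \<Rightarrow> nat"
  define enc where "enc x = (\<Sum>t<D. x t * d^t)" for x :: "nat \<Rightarrow> nat"
  define R where "R = D*(m-1)^2"
  have finX: "finite X" unfolding X_def by (intro finite_PiE) auto
  have cardX: "card X = m^D" unfolding X_def by (simp add: card_PiE)
  have Xdig: "x t < m" if "x \<in> X" "t < D" for x t using that unfolding X_def by auto
  have sqR: "sq ` X \<subseteq> {..R}"
  proof
    fix y assume "y \<in> sq ` X"
    then obtain x where x: "x \<in> X" "y = sq x" by auto
    have dig1: "x t \<le> m - 1" if "t<D" for t using Xdig[OF x(1) that] by linarith
    have "sq x \<le> (\<Sum>t<D. (m-1)^2)" unfolding sq_def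
      using dig1 by (intro sum_mono power_mono) auto
    thus "y \<in> {..R}" using x by (simp add: R_def)
  qed
  obtain r where r: "card X \<le> Suc R * card {x\<in>X. sq x = r}" using pigeon[OF finX sqR] by blast
  define V where "V = {x\<in>X. sq x = r}"
  have VX: "V \<subseteq> X" unfolding V_def by auto
  have finV: "finite V" using finX VX finite_subset by blast
  have md: "m \<le> d" unfolding d_def using K2 by simp
  have inj: "inj_on enc V"
  proof
    fix x y assume xy: "x \<in> V" "y \<in> V" "enc x = enc y"
    have "\<forall>t<D. x t = y t"
      using digits_unique[of D x d y] xy Xdig VX md unfolding enc_def
      by (meson less_le_trans subsetD)
    thus "x = y" using xy VX PiE_ext[of x "{..<D}" "\<lambda>_. {..<m}" y] unfolding X_def by auto
  qed
  define A where "A = enc ` V"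
  have cardA: "card A = card V" unfolding A_def using inj by (simp add: card_image)
  have encless: "enc x < d^D" if "x \<in> X" for x
    unfolding enc_def using Xdig[OF that] md by (intro enc_less) (meson less_le_trans)
  have Kd: "K * d^D \<le> n" using bd d_def by simp
  have dD: "d^D \<le> K*d^D" using K2 by simp
  have Asub: "A \<subseteq> {0..<n}" unfolding A_def
  proof
    fix y assume "y \<in> enc ` V"
    then obtain x where "x \<in> V" "y = enc x" by auto
    hence "y < d^D" using encless VX by auto
    thus "y \<in> {0..<n}" using Kd dD by (meson atLeastLessThan_iff le0 less_le_trans order_trans)
  qed
  have nob: "\<not> (\<exists>S\<subseteq>A. barycentric_mod n K S)"
  proof
    assume "\<exists>S\<subseteq>A. barycentric_mod n K S"
    then obtain S j where SA: "S \<subseteq> A" and cS: "card S = K" and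
      jS: "j \<in> S" and jm: "(\<Sum>S) mod n = (K*j) mod n"
      unfolding barycentric_mod_def by blast
    define W where "W = {x\<in>V. enc x \<in> S}"
    have SW: "S = enc ` W" unfolding W_def using SA unfolding A_def by auto
    have WV: "W \<subseteq> V" unfolding W_def by auto
    have WX: "W \<subseteq> X" using WV VX by auto
    have injW: "inj_on enc W" using inj WV inj_on_subset by blast
    have finW: "finite W" using finV WV finite_subset by blast
    have cW: "card W = K" using cS SW injW by (simp add: card_image)
    have Sless: "s < d^D" if "s \<in> S" for s using that SW encless WX by auto
    have Sne: "S \<noteq> {}" using cS K2 by auto
    have finS: "finite S" using SW finW by simp
    have "\<Sum>S < (\<Sum>s\<in>S. d^D)" using Sless Sne finS by (intro sum_strict_mono) auto
    hence s1: "\<Sum>S < n" using cS Kd by simp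
    have "K*j < K*d^D" using Sless[OF jS] K2 by simp
    hence s2: "K*j < n" using Kd by linarith
    have SeqKj: "\<Sum>S = K*j" using jm s1 s2 by simp
    obtain xj where xjW: "xj \<in> W" and jenc: "j = enc xj" using jS SW by auto
    have sumS: "\<Sum>S = (\<Sum>t<D. (\<Sum>x\<in>W. x t) * d^t)"
    proof -
      have "\<Sum>S = (\<Sum>x\<in>W. enc x)" using SW injW by (simp add: sum.reindex)
      also have "\<dots> = (\<Sum>t<D. (\<Sum>x\<in>W. x t) * d^t)"
        unfolding enc_def by (subst sum.swap) (simp add: sum_distrib_right)
      finally show ?thesis .
    qed
    have Kj: "K*j = (\<Sum>t<D. (K * xj t) * d^t)"
      unfolding jenc enc_def by (simp add: sum_distrib_left mult.assoc)
    have dKm: "K*(m-1) < d" unfolding d_def using K2 m1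
      by (metis diff_less less_le_trans mult_less_cancel1 zero_less_one pos2 le_numeral_extra(4) less_numeral_extra(1))
    have dig1: "x t \<le> m - 1" if "x \<in> W" "t<D" for x t
      using Xdig[of x t] that WX by fastforce
    have b1: "\<forall>t<D. (\<Sum>x\<in>W. x t) < d"
    proof (intro allI impI)
      fix t assume t: "t < D"
      have "(\<Sum>x\<in>W. x t) \<le> (\<Sum>x\<in>W. m - 1)" using dig1 t by (intro sum_mono) auto
      thus "(\<Sum>x\<in>W. x t) < d" using cW dKm by simp
    qed
    have b2: "\<forall>t<D. K * xj t < d"
    proof (intro allI impI)
      fix t assume t: "t < D"
      have "K * xj t \<le> K * (m-1)" using dig1[OF xjW t] by simp
      thus "K * xj t < d" using dKm by linarith
    qed
    have col: "\<forall>t<D. (\<Sum>x\<in>W. x t) = K * xj t"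
      using digits_unique[OF b1 b2] sumS Kj SeqKj by simp
    have sqW: "(\<Sum>t<D. int (x t)^2) = int r" if "x \<in> W" for x
    proof -
      have "sq x = r" using that WV V_def by auto
      hence "int (sq x) = int r" by simp
      thus ?thesis unfolding sq_def by simp
    qed
    have colI: "(\<Sum>x\<in>W. int (x t)) = int K * int (xj t)" if "t < D" for t
      using col that by (metis of_nat_mult of_nat_sum)
    have e1: "(\<Sum>x\<in>W. \<Sum>t<D. int (x t)^2) = int K * int r" using sqW cW by simp
    have e2: "(\<Sum>t<D. int (xj t) * (\<Sum>x\<in>W. int (x t))) = int K * int r"
    proof -
      have "(\<Sum>t<D. int (xj t) * (\<Sum>x\<in>W. int (x t))) = (\<Sum>t<D. int K * int (xj t)^2)"
        using colI by (intro sum.cong) (auto simp: power2_eq_square)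
      also have "\<dots> = int K * int r" using sqW[OF xjW] by (simp add: sum_distrib_left[symmetric])
      finally show ?thesis .
    qed
    have z: "(\<Sum>x\<in>W. \<Sum>t<D. (int (x t) - int (xj t))^2) = 0"
      using sq_identity[of "\<lambda>x t. int (x t)" "\<lambda>t. int (xj t)" D W] e1 e2 cW sqW[OF xjW] by simp
    have "\<forall>x\<in>W. \<forall>t<D. int (x t) - int (xj t) = 0"
    proof -
      have "\<forall>x\<in>W. (\<Sum>t<D. (int (x t) - int (xj t))^2) = 0"
        using z finW by (subst (asm) sum_nonneg_eq_0_iff) (auto intro: sum_nonneg)
      thus ?thesis by (simp add: sum_nonneg_eq_0_iff)
    qed
    hence eqW: "\<forall>x\<in>W. x = xj"
    proof (intro ballI)
      fix x assume H: "\<forall>x\<in>W. \<forall>t<D. int (x t) - int (xj t) = 0" and x: "x \<in> W"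
      have "x \<in> PiE {..<D} (\<lambda>_. {..<m})" "xj \<in> PiE {..<D} (\<lambda>_. {..<m})"
        using x xjW WX unfolding X_def by auto
      moreover have "\<And>t. t \<in> {..<D} \<Longrightarrow> x t = xj t" using H x by force
      ultimately show "x = xj" by (rule PiE_ext)
    qed
    hence "W \<subseteq> {xj}" by auto
    hence "card W \<le> 1" using card_mono[of "{xj}" W] by simp
    thus False using cW K2 by simp
  qed
  have "card A < BO_cyclic K n" by (rule BO_ge[OF Asub nob])
  hence "m^D \<le> Suc R * BO_cyclic K n" using r cardX cardA V_def
    by (metis dual_order.trans less_imp_le mult_le_mono2)
  thus ?thesis by (simp add: R_def)
qed

lemma ln2_le: "ln (2::real) \<le> 3/4"
proof -
  have "1 + 3/4 + (3/4)^2/2 \<le> exp (3/4::real)" by (rule exp_lower_Taylor_quadratic) simp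
  moreover have "(3/4::real)^2/2 = 9/32" by (simp add: power2_eq_square)
  ultimately have "2 \<le> exp (3/4::real)" by linarith
  hence "ln 2 \<le> ln (exp (3/4::real))" by (subst ln_le_cancel_iff) auto
  thus ?thesis by simp
qed

lemma quant:
  fixes K n :: nat
  assumes K3: "3 \<le> K" and Kn: "K + 3 \<le> n" and rat: "ln (real K) / ln (real n) \<le> 1/36"
  shows "real n * exp (- 5 * sqrt (ln (real K) * ln (real n))) \<le> real (BO_cyclic K n)"
proof -
  define l where "l = ln (real K)"
  define L where "L = ln (real n)"
  have Kpos: "real K > 0" using K3 by simp
  have npos: "real n > 0" using Kn by simp
  have l1: "1 \<le> l" unfolding l_def using Kpos exp_le K3
    by (subst ln_ge_iff) auto
  have Lpos: "L > 0" unfolding L_def using Kn by simp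
  have L36: "36 * l \<le> L" using rat Lpos unfolding l_def[symmetric] L_def[symmetric]
    by (simp add: divide_le_eq)
  define u where "u = sqrt (L / l)"
  have u2: "u^2 = L / l" unfolding u_def using Lpos l1 by simp
  have Lu: "L = u^2 * l" using u2 l1 by (simp add: field_simps)
  have u6: "6 \<le> u" unfolding u_def using L36 l1 by (intro real_le_rsqrt) (simp add: field_simps)
  define s where "s = u * l"
  have ssq: "sqrt (l * L) = s" unfolding s_def
    by (rule real_sqrt_unique) (use Lu u6 l1 in \<open>auto simp: power2_eq_square\<close>)
  define D where "D = nat \<lceil>u\<rceil>"
  have Du: "u \<le> real D" unfolding D_def by (rule real_nat_ceiling_ge)
  have Du1: "real D \<le> u + 1" unfolding D_def using u6 by (simp add: of_nat_nat)
  have D2: "D \<ge> 2" using Du u6 by linarith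
  have Dpos: "real D > 0" using Du u6 by linarith
  define g where "g = (L - l) / real D - l"
  have LL: "L - l = l * (u - 1) * (u + 1)" using Lu by (simp add: algebra_simps power2_eq_square)
  have "(L - l) / (u + 1) \<le> (L - l) / real D"
    using Du1 Dpos LL l1 u6 by (intro divide_left_mono) auto
  moreover have "(L - l) / (u + 1) = l * (u - 1)" using LL u6 by simp
  ultimately have g4: "g \<ge> l * (u - 2)" unfolding g_def by (simp add: algebra_simps)
  have "1 * 4 \<le> l * (u - 2)" using l1 u6 by (intro mult_mono) auto
  hence g4': "g \<ge> 4" using g4 by linarith
  define q where "q = exp g"
  have q2: "q \<ge> 2" unfolding q_def using exp_ge_add_one_self[of g] g4' by linarith
  define m where "m = nat \<lfloor>q\<rfloor>"
  have mq: "real m \<le> q" unfolding m_def using q2 by (intro of_nat_floor) auto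
  have mq2: "real m \<ge> q / 2" unfolding m_def using q2 by (simp add: of_nat_nat) linarith
  have m1: "m \<ge> 1" using mq2 q2 by (simp add: le_divide_eq)
  have Kexp: "real K = exp l" unfolding l_def using Kpos by simp
  have nexp: "real n = exp L" unfolding L_def using npos by simp
  have "real K * (real K * real m)^D \<le> real K * (real K * q)^D"
    using mq Kpos by (intro mult_left_mono power_mono) auto
  also have "real K * q = exp ((L - l) / real D)" unfolding Kexp q_def g_def
    by (simp add: exp_add[symmetric])
  also have "exp ((L - l) / real D) ^ D = exp (L - l)"
    using Dpos by (simp add: exp_of_nat_mult[symmetric])
  also have "real K * exp (L - l) = real n" unfolding Kexp nexp by (simp add: exp_add[symmetric])
  finally have "real (K * (K*m)^D) \<le> real n" by simp
  hence bd: "K * (K*m)^D \<le> n" by linarith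
  have cons: "m^D \<le> Suc (D*(m-1)^2) * BO_cyclic K n"
    by (rule construction) (use K3 m1 bd in auto)
  have "D*(m-1)^2 \<le> D * m^2" by (intro mult_left_mono power_mono) auto
  moreover have "1 \<le> m^2" using m1 by simp
  moreover have "(D+1) * m^2 = D*m^2 + m^2" by simp
  ultimately have "Suc (D*(m-1)^2) \<le> (D+1) * m^2" by linarith
  hence "m^D \<le> (D+1) * m^2 * BO_cyclic K n" using cons
    by (meson le_trans mult_le_mono1)
  hence c1: "real m ^ D \<le> (real D + 1) * real m ^ 2 * real (BO_cyclic K n)"
    by (metis (mono_tags) of_nat_1 of_nat_add of_nat_le_iff of_nat_mult of_nat_power)
  have "real m ^ D = real m ^ 2 * real m ^ (D - 2)" using D2
    by (metis le_add_diff_inverse power_add)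
  hence c2: "real m ^ (D - 2) / (real D + 1) \<le> real (BO_cyclic K n)"
    using c1 m1 Dpos by (simp add: divide_le_eq mult.commute mult.left_commute)
  have "(q/2) ^ (D - 2) \<le> real m ^ (D - 2)" using mq2 q2 by (intro power_mono) auto
  moreover have "(q/2) ^ (D - 2) = exp (real (D - 2) * (g - ln 2))"
    unfolding exp_of_nat_mult q_def by (simp add: exp_diff)
  ultimately have c3: "exp (real (D - 2) * (g - ln 2)) / (real D + 1) \<le> real (BO_cyclic K n)"
    using c2 Dpos by (smt (verit) divide_right_mono)
  define Dr where "Dr = real D"
  have rD2: "real (D - 2) = Dr - 2" unfolding Dr_def using D2 by simp
  have iden: "(Dr - 2) * (g - ln 2) = (L - l) - 2 * ((L - l) / Dr) - (Dr - 2) * (l + ln 2)"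
    unfolding g_def Dr_def using Dpos by (simp add: field_simps)
  have f1: "(L - l) / Dr \<le> s"
  proof -
    have "(L - l) / Dr \<le> L / Dr" using l1 Dpos unfolding Dr_def by (intro divide_right_mono) auto
    also have "\<dots> \<le> L / u" using Du u6 Lpos unfolding Dr_def by (intro divide_left_mono) auto
    also have "L / u = s" unfolding s_def using Lu u6 by (simp add: power2_eq_square)
    finally show ?thesis .
  qed
  have ln2p: "0 < ln (2::real)" by simp
  have f2: "(Dr - 2) * (l + ln 2) \<le> (u - 1) * (l + ln 2)"
    using Du1 l1 ln2p unfolding Dr_def by (intro mult_right_mono) auto
  have f3: "ln (Dr + 1) \<le> u + 1" using ln_le_minus_one[of "Dr + 1"] Dpos Du1 unfolding Dr_def by linarith
  have f4: "(u - 1) * (l + ln 2) = s - l + u * ln 2 - ln 2" unfolding s_def by (simp add: algebra_simps)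
  have f5: "u * ln 2 \<le> u * (3/4)" using ln2_le u6 by (intro mult_left_mono) auto
  have f6: "2 * u \<le> 2 * s" unfolding s_def using l1 u6 by simp
  have key: "L - 5 * s + ln (Dr + 1) \<le> (Dr - 2) * (g - ln 2)"
    using iden f1 f2 f3 f4 f5 f6 u6 ln2p by linarith
  have "real n * exp (- 5 * s) = exp (L - 5 * s)" unfolding nexp by (simp add: exp_add[symmetric])
  also have "\<dots> = exp (L - 5 * s + ln (Dr + 1)) / (Dr + 1)"
    using Dpos unfolding Dr_def by (simp add: exp_add)
  also have "\<dots> \<le> exp ((Dr - 2) * (g - ln 2)) / (Dr + 1)"
    using key Dpos unfolding Dr_def by (intro divide_right_mono) auto
  also have "\<dots> \<le> real (BO_cyclic K n)" using c3 rD2 unfolding Dr_def by simp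
  finally show ?thesis using ssq unfolding l_def L_def by simp
qed

theorem mainTheorem11:
  fixes k :: "nat \<Rightarrow> nat"
  assumes "\<forall>\<^sub>F n in sequentially. 3 \<le> k n \<and> k n + 3 \<le> n"
    and "((\<lambda>n. ln (real (k n)) / ln (real n)) \<longlongrightarrow> 0) sequentially"
  shows "\<forall>\<^sub>F n in sequentially.
           real (BO_cyclic (k n) n) \<ge> real n * exp (- 5 * sqrt (ln (real (k n)) * ln (real n)))"
proof -
  have "\<forall>\<^sub>F n in sequentially. ln (real (k n)) / ln (real n) < 1/36"
    using order_tendstoD(2)[OF assms(2), of "1/36"] by simp
  with assms(1) show ?thesis
    by eventually_elim (intro quant, auto)
qed

end
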